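(* For any based space $(X,x_0)$, the topology of $\pi_1^{\tau}(X,x_0)$ is the finest group topology on $\pi_1(X,x_0)$ for which the map $\pi:\Omega(X,x_0)\to\pi_1(X,x_0)$, $\alpha\mapsto[\alpha]$, is continuous. Equivalently, if $\Phi:\pi_1(X,x_0)\to G$ is a homomorphism to a topological group $G$ such that $\Phi\circ\pi:\Omega(X,x_0)\to G$ is continuous, then $\Phi:\pi_1^{\tau}(X,x_0)\to G$ is continuous.
   Context: $\Omega(X,x_0)$ is the space of loops at $x_0$ with the compact-open topology. $\pi_1^{qtop}(X,x_0)$ is $\pi_1(X,x_0)$ with the quotient topology with respect to $\pi$. $F_M(S)$ is the free (Markov) topological group on a space $S$. For a group with (arbitrary) topology $G$, $\tau(G)$ is $G$ with the quotient topology with respect to the multiplication epimorphism $m_G:F_M(G)\to G$ sending each generator $g$ to $g$. $\pi_1^{\tau}(X,x_0)=\tau(\pi_1^{qtop}(X,x_0))$. *)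

theory Defs
  imports "HOL-Analysis.Analysis" "HOL-Algebra.Group"
begin

definition group_topology :: "('g, 'b) monoid_scheme \<Rightarrow> 'g topology \<Rightarrow> bool" where
  "group_topology G T \<longleftrightarrow> group G \<and> topspace T = carrier G
     \<and> continuous_map (prod_topology T T) T (\<lambda>(x, y). x \<otimes>\<^bsub>G\<^esub> y)
     \<and> continuous_map T T (\<lambda>x. inv\<^bsub>G\<^esub> x)"

text \<open>Loops are represented as functions on [0,1], extensional (undefined outside [0,1]).\<close>

definition loop_space :: "'a topology \<Rightarrow> 'a \<Rightarrow> (real \<Rightarrow> 'a) set" where
  "loop_space X x0 = {g. pathin X g \<and> g 0 = x0 \<and> g 1 = x0 \<and> g \<in> extensional {0..1}}"

definition loop_space_top :: "'a topology \<Rightarrow> 'a \<Rightarrow> (real \<Rightarrow> 'a) topology" where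
  "loop_space_top X x0 = topology_generated_by
     {{g \<in> loop_space X x0. g ` K \<subseteq> U} | K U.
        compactin (subtopology euclideanreal {0..1}) K \<and> openin X U}"

definition loop_homotopic :: "'a topology \<Rightarrow> 'a \<Rightarrow> (real \<Rightarrow> 'a) \<Rightarrow> (real \<Rightarrow> 'a) \<Rightarrow> bool" where
  "loop_homotopic X x0 f g \<longleftrightarrow>
     homotopic_with (\<lambda>h. h 0 = x0 \<and> h 1 = x0) (subtopology euclideanreal {0..1}) X f g"

definition loop_class :: "'a topology \<Rightarrow> 'a \<Rightarrow> (real \<Rightarrow> 'a) \<Rightarrow> (real \<Rightarrow> 'a) set" where
  "loop_class X x0 f = {g \<in> loop_space X x0. loop_homotopic X x0 f g}"

text \<open>Concatenation of loops (same formula as joinpaths, for arbitrary point types).\<close>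
definition loop_concat :: "(real \<Rightarrow> 'a) \<Rightarrow> (real \<Rightarrow> 'a) \<Rightarrow> (real \<Rightarrow> 'a)" where
  "loop_concat f g = restrict (\<lambda>t. if t \<le> 1/2 then f (2 * t) else g (2 * t - 1)) {0..1}"

definition fundamental_group :: "'a topology \<Rightarrow> 'a \<Rightarrow> ((real \<Rightarrow> 'a) set) monoid" where
  "fundamental_group X x0 =
     \<lparr> carrier = loop_class X x0 ` loop_space X x0,
       mult = (\<lambda>A B. loop_class X x0
                 (loop_concat (SOME f. f \<in> A) (SOME g. g \<in> B))),
       one = loop_class X x0 (restrict (\<lambda>t. x0) {0..1}) \<rparr>"

definition pi1_qtop :: "'a topology \<Rightarrow> 'a \<Rightarrow> ((real \<Rightarrow> 'a) set) topology" where
  "pi1_qtop X x0 = topology (\<lambda>U. U \<subseteq> carrier (fundamental_group X x0) \<and>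
      openin (loop_space_top X x0) {g \<in> loop_space X x0. loop_class X x0 g \<in> U})"

text \<open>Words: letters (True, x) = x, (False, x) = x^{-1}.\<close>
definition reduce_word :: "(bool \<times> 's) list \<Rightarrow> (bool \<times> 's) list" where
  "reduce_word w = foldr (\<lambda>l acc. case acc of [] \<Rightarrow> [l]
      | l' # acc' \<Rightarrow> (if snd l = snd l' \<and> fst l \<noteq> fst l' then acc' else l # acc)) w []"

definition reduced_word :: "(bool \<times> 's) list \<Rightarrow> bool" where
  "reduced_word w \<longleftrightarrow> (\<forall>i. Suc i < length w \<longrightarrow>
      \<not> (snd (w ! i) = snd (w ! Suc i) \<and> fst (w ! i) \<noteq> fst (w ! Suc i)))"

definition free_group :: "'s set \<Rightarrow> ((bool \<times> 's) list) monoid" where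
  "free_group S = \<lparr> carrier = {w. reduced_word w \<and> snd ` set w \<subseteq> S},
                    mult = (\<lambda>v w. reduce_word (v @ w)),
                    one = [] \<rparr>"

definition free_gen :: "'s \<Rightarrow> (bool \<times> 's) list" where
  "free_gen x = [(True, x)]"

text \<open>F_M(S): the free group on the points of S with the finest group topology making
  the canonical map S to F(S) continuous (equivalently, the Markov universal property).\<close>
definition free_top_group :: "'s topology \<Rightarrow> ((bool \<times> 's) list) topology" where
  "free_top_group S = topology_generated_by
     (\<Union> {Collect (openin T) | T. group_topology (free_group (topspace S)) T
                                  \<and> continuous_map S T free_gen})"

definition word_mult :: "('g, 'b) monoid_scheme \<Rightarrow> (bool \<times> 'g) list \<Rightarrow> 'g" where
  "word_mult G w = foldr (\<lambda>(b, x) acc. (if b then x else inv\<^bsub>G\<^esub> x) \<otimes>\<^bsub>G\<^esub> acc) w \<one>\<^bsub>G\<^esub>"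

definition tau_top :: "('g, 'b) monoid_scheme \<Rightarrow> 'g topology \<Rightarrow> 'g topology" where
  "tau_top G T = topology (\<lambda>U. U \<subseteq> carrier G \<and>
      openin (free_top_group T) {w \<in> carrier (free_group (carrier G)). word_mult G w \<in> U})"

definition pi1_tau :: "'a topology \<Rightarrow> 'a \<Rightarrow> ((real \<Rightarrow> 'a) set) topology" where
  "pi1_tau X x0 = tau_top (fundamental_group X x0) (pi1_qtop X x0)"

end

theory Submission
  imports Defs
begin


abbreviation "II \<equiv> top_of_set {0..1::real}"

lemma loop_homotopic_iff:
  "loop_homotopic X x0 f g \<longleftrightarrow>
   (\<exists>H. continuous_map (prod_topology II II) X H \<and> (\<forall>x\<in>{0..1}. H(0,x) = f x)
      \<and> (\<forall>x\<in>{0..1}. H(1,x) = g x) \<and> (\<forall>t\<in>{0..1}. H(t,0) = x0 \<and> H(t,1) = x0))"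
  unfolding loop_homotopic_def
  by (subst homotopic_with) auto

lemma cvx01: "0 \<le> s \<Longrightarrow> s \<le> 1 \<Longrightarrow> 0 \<le> u \<Longrightarrow> u \<le> 1 \<Longrightarrow> 0 \<le> v \<Longrightarrow> v \<le> 1
  \<Longrightarrow> (0 \<le> (1-s)*u + s * v) \<and> ((1-s)*u + s * v \<le> (1::real))"
proof -
  assume a: "0 \<le> s" "s \<le> 1" "0 \<le> u" "u \<le> 1" "0 \<le> v" "v \<le> 1"
  have "(1-s)*u \<le> (1-s)*1" using a by (intro mult_left_mono) auto
  moreover have "s * v \<le> s*1" using a by (intro mult_left_mono) auto
  ultimately show ?thesis using a by auto
qed

lemma reparam_homotopic:
  assumes a: "pathin X a"
    and cp: "continuous_on {0..1} pp" and cc: "continuous_on {0..1} qq"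
    and rp: "pp ` {0..1} \<subseteq> {0..1}" and rc: "qq ` {0..1} \<subseteq> {0..1}"
    and e0: "pp 0 = qq 0" and e1: "pp 1 = qq 1"
    and x0: "a (pp 0) = x0" and x1: "a (pp 1) = x0"
    and g: "\<And>x. x \<in> {0..1} \<Longrightarrow> g x = a (pp x)"
    and h: "\<And>x. x \<in> {0..1} \<Longrightarrow> h x = a (qq x)"
  shows "loop_homotopic X x0 g h"
proof -
  define k where "k = (\<lambda>z::real\<times>real. (1 - fst z) * pp (snd z) + fst z * qq (snd z))"
  have c1: "continuous_on ({0..1}\<times>{0..1}) (\<lambda>z::real\<times>real. pp (snd z))"
    by (rule continuous_on_compose2[OF cp continuous_on_snd]) auto
  have c2: "continuous_on ({0..1}\<times>{0..1}) (\<lambda>z::real\<times>real. qq (snd z))"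
    by (rule continuous_on_compose2[OF cc continuous_on_snd]) auto
  have kc: "continuous_on ({0..1}\<times>{0..1}) k"
    unfolding k_def by (intro continuous_intros c1 c2)
  have kr: "k \<in> ({0..1}\<times>{0..1}) \<rightarrow> {0..1}"
  proof
    fix z :: "real\<times>real" assume z: "z \<in> {0..1}\<times>{0..1}"
    then have "pp (snd z) \<in> {0..1}" "qq (snd z) \<in> {0..1}" using rp rc by auto
    then show "k z \<in> {0..1}" using z cvx01[of "fst z" "pp (snd z)" "qq (snd z)"]
      unfolding k_def by auto
  qed
  have "continuous_map (prod_topology II II) II k"
    using kc kr by simp
  then have H: "continuous_map (prod_topology II II) X (a \<circ> k)"
    using a unfolding pathin_def by (rule continuous_map_compose)
  show ?thesis
    unfolding loop_homotopic_iff
  proof (intro exI conjI ballI)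
    show "continuous_map (prod_topology II II) X (a \<circ> k)" by (rule H)
  qed (auto simp: k_def g h e0 e1 x0 x1 algebra_simps simp flip: e0 e1)
qed

lemma cm_II_sub:
  assumes "continuous_on A k" "k ` A \<subseteq> {0..1}"
  shows "continuous_map (top_of_set A) II k"
  using assms by auto

lemma paste_paths:
  assumes f: "pathin X f" and g: "pathin X g" and fg: "f 1 = g 0"
  shows "continuous_map II X (\<lambda>t. if t \<le> 1/2 then f (2*t) else g (2*t - 1))"
proof (rule continuous_map_cases_le)
  show "continuous_map II euclideanreal (\<lambda>x. x)" by simp
  show "continuous_map II euclideanreal (\<lambda>x. 1/2)" by simp
  have "continuous_map (top_of_set ({0..1} \<inter> {x. x \<in> topspace II \<and> x \<le> 1/2})) II (\<lambda>t. 2*t)"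
    by (rule cm_II_sub) (auto intro!: continuous_intros)
  then show "continuous_map (subtopology II {x. x \<in> topspace II \<and> x \<le> 1/2}) X (\<lambda>t. f (2*t))"
    using f unfolding pathin_def subtopology_subtopology
    by (rule continuous_map_compose[unfolded o_def])
  have "continuous_map (top_of_set ({0..1} \<inter> {x. x \<in> topspace II \<and> 1/2 \<le> x})) II (\<lambda>t. 2*t - 1)"
    by (rule cm_II_sub) (auto intro!: continuous_intros)
  then show "continuous_map (subtopology II {x. x \<in> topspace II \<and> 1/2 \<le> x}) X (\<lambda>t. g (2*t - 1))"
    using g unfolding pathin_def subtopology_subtopology
    by (rule continuous_map_compose[unfolded o_def])
next
  fix x assume "x \<in> topspace II" "x = (1/2::real)"
  then have x: "2*x = 1" by simp
  show "f (2*x) = g (2*x - 1)" using fg by (simp add: x)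
qed

lemma loop_spaceD:
  assumes "f \<in> loop_space X x0"
  shows "pathin X f" "f 0 = x0" "f 1 = x0" "f \<in> extensional {0..1}"
  using assms unfolding loop_space_def by auto

lemma loop_concat_eq: "t \<in> {0..1} \<Longrightarrow> loop_concat f g t = (if t \<le> 1/2 then f (2*t) else g (2*t - 1))"
  unfolding loop_concat_def by simp

lemma pathin_loop_concat:
  assumes "pathin X f" "pathin X g" "f 1 = g 0"
  shows "pathin X (loop_concat f g)"
  unfolding pathin_def
  by (rule continuous_map_eq[OF paste_paths[OF assms, unfolded pathin_def]])
     (simp add: loop_concat_eq)

lemma loop_concat_in:
  assumes "f \<in> loop_space X x0" "g \<in> loop_space X x0"
  shows "loop_concat f g \<in> loop_space X x0"
proof -
  have "pathin X (loop_concat f g)"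
    using assms by (intro pathin_loop_concat) (auto dest: loop_spaceD)
  then show ?thesis using assms
    unfolding loop_space_def by (auto simp: loop_concat_eq loop_concat_def)
qed

lemma loop_homotopic_concat:
  assumes "loop_homotopic X x0 f f'" "loop_homotopic X x0 g g'"
  shows "loop_homotopic X x0 (loop_concat f g) (loop_concat f' g')"
proof -
  obtain H1 where H1: "continuous_map (prod_topology II II) X H1" "\<forall>x\<in>{0..1}. H1(0,x) = f x"
      "\<forall>x\<in>{0..1}. H1(1,x) = f' x" "\<forall>t\<in>{0..1}. H1(t,0) = x0 \<and> H1(t,1) = x0"
    using assms(1) unfolding loop_homotopic_iff by blast
  obtain H2 where H2: "continuous_map (prod_topology II II) X H2" "\<forall>x\<in>{0..1}. H2(0,x) = g x"
      "\<forall>x\<in>{0..1}. H2(1,x) = g' x" "\<forall>t\<in>{0..1}. H2(t,0) = x0 \<and> H2(t,1) = x0"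
    using assms(2) unfolding loop_homotopic_iff by blast
  let ?S = "{0..1::real}\<times>{0..1::real}"
  let ?H = "\<lambda>z::real\<times>real. if snd z \<le> 1/2 then H1 (fst z, 2 * snd z) else H2 (fst z, 2 * snd z - 1)"
  have cH: "continuous_map (prod_topology II II) X ?H"
  proof (rule continuous_map_cases_le)
    show "continuous_map (prod_topology II II) euclideanreal snd"
      by (simp add: continuous_on_snd)
    show "continuous_map (prod_topology II II) euclideanreal (\<lambda>x. 1/2)" by simp
    have "continuous_map (top_of_set (?S \<inter> {x. x \<in> topspace (prod_topology II II) \<and> snd x \<le> 1/2}))
             (top_of_set ?S) (\<lambda>z. (fst z, 2 * snd z))"
      by (auto intro!: continuous_intros)
    then show "continuous_map (subtopology (prod_topology II II) {x. x \<in> topspace (prod_topology II II) \<and> snd x \<le> 1/2}) X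
        (\<lambda>z. H1 (fst z, 2 * snd z))"
      using H1(1) unfolding prod_topology_subtopology_eu subtopology_subtopology
      by (rule continuous_map_compose[unfolded o_def])
    have "continuous_map (top_of_set (?S \<inter> {x. x \<in> topspace (prod_topology II II) \<and> 1/2 \<le> snd x}))
             (top_of_set ?S) (\<lambda>z. (fst z, 2 * snd z - 1))"
      by (auto intro!: continuous_intros)
    then show "continuous_map (subtopology (prod_topology II II) {x. x \<in> topspace (prod_topology II II) \<and> 1/2 \<le> snd x}) X
        (\<lambda>z. H2 (fst z, 2 * snd z - 1))"
      using H2(1) unfolding prod_topology_subtopology_eu subtopology_subtopology
      by (rule continuous_map_compose[unfolded o_def])
  next
    fix z :: "real\<times>real" assume z: "z \<in> topspace (prod_topology II II)" "snd z = 1/2"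
    then have x: "2 * snd z = 1" by simp
    have "fst z \<in> {0..1}" using z(1) by (auto simp: mem_Times_iff)
    then show "H1 (fst z, 2 * snd z) = H2 (fst z, 2 * snd z - 1)" using H1 H2 by (simp add: x)
  qed
  show ?thesis
    unfolding loop_homotopic_iff
    apply (rule exI[of _ ?H])
    using cH H1 H2 by (auto simp: loop_concat_eq)
qed

lemma lh_refl: "f \<in> loop_space X x0 \<Longrightarrow> loop_homotopic X x0 f f"
  unfolding loop_homotopic_def loop_space_def pathin_def by simp

lemma lh_sym: "loop_homotopic X x0 f g \<Longrightarrow> loop_homotopic X x0 g f"
  unfolding loop_homotopic_def by (rule homotopic_with_symD)

lemma lh_trans: "loop_homotopic X x0 f g \<Longrightarrow> loop_homotopic X x0 g h \<Longrightarrow> loop_homotopic X x0 f h"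
  unfolding loop_homotopic_def by (rule homotopic_with_trans)

lemma class_eq: "loop_homotopic X x0 f g \<Longrightarrow> loop_class X x0 f = loop_class X x0 g"
  unfolding loop_class_def by (blast intro: lh_sym lh_trans)

lemma class_self: "f \<in> loop_space X x0 \<Longrightarrow> f \<in> loop_class X x0 f"
  unfolding loop_class_def by (simp add: lh_refl)

lemma some_class:
  assumes "f \<in> loop_space X x0"
  shows "(SOME h. h \<in> loop_class X x0 f) \<in> loop_space X x0"
    "loop_homotopic X x0 f (SOME h. h \<in> loop_class X x0 f)"
proof -
  have "(SOME h. h \<in> loop_class X x0 f) \<in> loop_class X x0 f"
    using class_self[OF assms] by (rule someI[where P="\<lambda>h. h \<in> loop_class X x0 f"])
  then show "(SOME h. h \<in> loop_class X x0 f) \<in> loop_space X x0"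
    "loop_homotopic X x0 f (SOME h. h \<in> loop_class X x0 f)"
    unfolding loop_class_def by auto
qed

lemma fg_mult:
  assumes "a \<in> loop_space X x0" "b \<in> loop_space X x0"
  shows "loop_class X x0 a \<otimes>\<^bsub>fundamental_group X x0\<^esub> loop_class X x0 b
         = loop_class X x0 (loop_concat a b)"
  unfolding fundamental_group_def monoid.simps
  by (rule class_eq, rule lh_sym, rule loop_homotopic_concat[OF some_class(2)[OF assms(1)] some_class(2)[OF assms(2)]])

definition const_loop :: "'a \<Rightarrow> real \<Rightarrow> 'a" where
  "const_loop x0 = restrict (\<lambda>t. x0) {0..1}"

definition rev_loop :: "(real \<Rightarrow> 'a) \<Rightarrow> real \<Rightarrow> 'a" where
  "rev_loop f = restrict (\<lambda>t. f (1 - t)) {0..1}"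

lemma const_loop_in: "x0 \<in> topspace X \<Longrightarrow> const_loop x0 \<in> loop_space X x0"
  unfolding loop_space_def const_loop_def pathin_def
  by (auto intro: continuous_map_eq[OF continuous_map_const[THEN iffD2]])

lemma rev_loop_in:
  assumes "f \<in> loop_space X x0" shows "rev_loop f \<in> loop_space X x0"
proof -
  have "continuous_map II II (\<lambda>t. 1 - t)"
    by (rule cm_II_sub) (auto intro!: continuous_intros)
  then have "continuous_map II X (\<lambda>t. f (1 - t))"
    using loop_spaceD(1)[OF assms] unfolding pathin_def
    by (rule continuous_map_compose[unfolded o_def])
  then have "pathin X (rev_loop f)"
    unfolding pathin_def rev_loop_def by (rule continuous_map_eq) auto
  then show ?thesis using loop_spaceD[OF assms] unfolding loop_space_def rev_loop_def by auto
qed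

lemma fg_carrier: "carrier (fundamental_group X x0) = loop_class X x0 ` loop_space X x0"
  by (simp add: fundamental_group_def)

lemma fg_one: "\<one>\<^bsub>fundamental_group X x0\<^esub> = loop_class X x0 (const_loop x0)"
  by (simp add: fundamental_group_def const_loop_def)

lemma assoc_htpy:
  assumes a: "a \<in> loop_space X x0" and b: "b \<in> loop_space X x0" and c: "c \<in> loop_space X x0"
  shows "loop_homotopic X x0 (loop_concat (loop_concat a b) c) (loop_concat a (loop_concat b c))"
proof (rule reparam_homotopic[where pp = "\<lambda>t. min (2*t) (min (t + 1/4) ((t+1)/2))" and qq = "\<lambda>t. t"])
  have bc: "loop_concat b c \<in> loop_space X x0" using b c by (rule loop_concat_in)
  have abc: "loop_concat a (loop_concat b c) \<in> loop_space X x0" by (rule loop_concat_in[OF a bc])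
  then show "pathin X (loop_concat a (loop_concat b c))" by (rule loop_spaceD)
  show "continuous_on {0..1} (\<lambda>t::real. min (2*t) (min (t + 1/4) ((t+1)/2)))"
    by (intro continuous_intros) auto
  show "(\<lambda>t::real. min (2*t) (min (t + 1/4) ((t+1)/2))) ` {0..1} \<subseteq> {0..1}" by (auto simp: min_def)
  show "loop_concat a (loop_concat b c) (min (2 * 0) (min (0 + 1 / 4) ((0 + 1) / 2))) = x0"
    using loop_spaceD[OF abc] by simp
  show "loop_concat a (loop_concat b c) (min (2 * 1) (min (1 + 1 / 4) ((1 + 1) / 2))) = x0"
    using loop_spaceD[OF abc] by simp
  fix x :: real assume x: "x \<in> {0..1}"
  show "loop_concat (loop_concat a b) c x =
      loop_concat a (loop_concat b c) (min (2 * x) (min (x + 1 / 4) ((x + 1) / 2)))"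
    using x loop_spaceD[OF a] loop_spaceD[OF b] loop_spaceD[OF c]
    apply (auto simp: loop_concat_eq min_def field_simps)
     apply (rule arg_cong[where f=b]; simp add: field_simps)
    by (rule arg_cong[where f=c]; simp add: field_simps)
qed (auto intro: continuous_intros)

lemma lone_htpy:
  assumes a: "a \<in> loop_space X x0"
  shows "loop_homotopic X x0 (loop_concat (const_loop x0) a) a"
proof (rule reparam_homotopic[where pp = "\<lambda>t. max 0 (2*t - 1)" and qq = "\<lambda>t. t" and a = a])
  show "pathin X a" using a by (rule loop_spaceD)
  show "(\<lambda>t::real. max 0 (2*t - 1)) ` {0..1} \<subseteq> {0..1}" by (auto simp: max_def)
  fix x :: real assume x: "x \<in> {0..1}"
  show "loop_concat (const_loop x0) a x = a (max 0 (2 * x - 1))"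
  proof (cases "x = 1/2")
    case True show ?thesis unfolding True using loop_spaceD[OF a]
      by (simp add: loop_concat_eq const_loop_def)
  next
    case False then show ?thesis using x loop_spaceD[OF a]
      by (auto simp: loop_concat_eq max_def const_loop_def)
  qed
qed (use loop_spaceD[OF a] in \<open>auto intro!: continuous_intros\<close>)

lemma linv_htpy:
  assumes a: "a \<in> loop_space X x0"
  shows "loop_homotopic X x0 (loop_concat (rev_loop a) a) (const_loop x0)"
proof (rule reparam_homotopic[where pp = "\<lambda>t. \<bar>2*t - 1\<bar>" and qq = "\<lambda>t. 1" and a = a])
  show "pathin X a" using a by (rule loop_spaceD)
  show "(\<lambda>t::real. \<bar>2*t - 1\<bar>) ` {0..1} \<subseteq> {0..1}" by auto
  fix x :: real assume x: "x \<in> {0..1}"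
  show "loop_concat (rev_loop a) a x = a \<bar>2 * x - 1\<bar>"
  proof (cases "x = 1/2")
    case True show ?thesis unfolding True using loop_spaceD[OF a]
      by (simp add: loop_concat_eq rev_loop_def)
  next
    case False then show ?thesis using x loop_spaceD[OF a]
      by (auto simp: loop_concat_eq rev_loop_def abs_if)
  qed
  show "const_loop x0 x = a 1" using x loop_spaceD[OF a] by (simp add: const_loop_def)
qed (use loop_spaceD[OF a] in \<open>auto intro!: continuous_intros\<close>)

lemma fg_group:
  assumes x0: "x0 \<in> topspace X"
  shows "group (fundamental_group X x0)"
proof (rule groupI)
  let ?G = "fundamental_group X x0"
  show "x \<otimes>\<^bsub>?G\<^esub> y \<in> carrier ?G" if "x \<in> carrier ?G" "y \<in> carrier ?G" for x y
    using that by (auto simp: fg_carrier fg_mult loop_concat_in)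
  show "\<one>\<^bsub>?G\<^esub> \<in> carrier ?G" using x0 by (simp add: fg_carrier fg_one const_loop_in)
  show "x \<otimes>\<^bsub>?G\<^esub> y \<otimes>\<^bsub>?G\<^esub> z = x \<otimes>\<^bsub>?G\<^esub> (y \<otimes>\<^bsub>?G\<^esub> z)"
    if xyz: "x \<in> carrier ?G" "y \<in> carrier ?G" "z \<in> carrier ?G" for x y z
  proof -
    obtain a b c where "a \<in> loop_space X x0" "b \<in> loop_space X x0" "c \<in> loop_space X x0"
      "x = loop_class X x0 a" "y = loop_class X x0 b" "z = loop_class X x0 c"
      using xyz unfolding fg_carrier image_iff by blast
    then show ?thesis by (simp add: fg_mult loop_concat_in class_eq[OF assoc_htpy])
  qed
  show "\<one>\<^bsub>?G\<^esub> \<otimes>\<^bsub>?G\<^esub> x = x" if xG: "x \<in> carrier ?G" for x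
  proof -
    obtain a where "a \<in> loop_space X x0" "x = loop_class X x0 a"
      using xG unfolding fg_carrier image_iff by blast
    then show ?thesis using x0 by (simp add: fg_one fg_mult const_loop_in class_eq[OF lone_htpy])
  qed
  show "\<exists>y\<in>carrier ?G. y \<otimes>\<^bsub>?G\<^esub> x = \<one>\<^bsub>?G\<^esub>" if xG: "x \<in> carrier ?G" for x
  proof -
    obtain a where a: "a \<in> loop_space X x0" "x = loop_class X x0 a"
      using xG unfolding fg_carrier image_iff by blast
    have "loop_class X x0 (rev_loop a) \<otimes>\<^bsub>?G\<^esub> x = \<one>\<^bsub>?G\<^esub>"
      using a rev_loop_in[OF a(1)] by (simp add: fg_one fg_mult class_eq[OF linv_htpy])
    moreover have "loop_class X x0 (rev_loop a) \<in> carrier ?G"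
      using rev_loop_in[OF a(1)] by (simp add: fg_carrier)
    ultimately show ?thesis by blast
  qed
qed



definition rstep :: "bool \<times> 's \<Rightarrow> (bool \<times> 's) list \<Rightarrow> (bool \<times> 's) list" where
  "rstep l acc = (case acc of [] \<Rightarrow> [l]
      | l' # acc' \<Rightarrow> (if snd l = snd l' \<and> fst l \<noteq> fst l' then acc' else l # acc))"

definition ninv :: "bool \<times> 's \<Rightarrow> bool \<times> 's" where "ninv l = (\<not> fst l, snd l)"

lemma reduce_word_foldr: "reduce_word w = foldr rstep w []"
  unfolding reduce_word_def rstep_def by simp

lemma cancel_iff: "(snd l = snd l' \<and> fst l \<noteq> fst l') \<longleftrightarrow> l' = ninv l"
  by (cases l; cases l') (auto simp: ninv_def)

lemma ninv_ninv[simp]: "ninv (ninv l) = l" by (simp add: ninv_def)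

lemma rstep_Nil[simp]: "rstep l [] = [l]" by (simp add: rstep_def)
lemma rstep_Cons: "rstep l (l' # acc) = (if l' = ninv l then acc else l # l' # acc)"
  unfolding rstep_def by (simp only: list.case cancel_iff)

lemma reduced_Nil[simp]: "reduced_word []" by (simp add: reduced_word_def)
lemma reduced_single[simp]: "reduced_word [l]" by (simp add: reduced_word_def)
lemma reduced_Cons2: "reduced_word (l # l' # w) \<longleftrightarrow> l' \<noteq> ninv l \<and> reduced_word (l' # w)"
proof -
  have "reduced_word (l # l' # w) \<longleftrightarrow> \<not> (snd l = snd l' \<and> fst l \<noteq> fst l') \<and> reduced_word (l' # w)"
    unfolding reduced_word_def
    apply (rule iffI)
     apply (intro conjI allI impI)
      apply (erule allE[of _ 0]; simp)
     apply (erule_tac x="Suc i" in allE; simp)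
    apply (intro allI impI, elim conjE)
    subgoal for i by (cases i) auto
    done
  then show ?thesis using cancel_iff[of l l'] by blast
qed

lemma reduced_tl: "reduced_word (l # w) \<Longrightarrow> reduced_word w"
  by (cases w) (auto simp: reduced_Cons2)

lemma reduced_rstep: "reduced_word acc \<Longrightarrow> reduced_word (rstep l acc)"
  by (cases acc) (auto simp: rstep_Cons reduced_Cons2 intro: reduced_tl)

lemma rstep_ninv: "reduced_word acc \<Longrightarrow> rstep l (rstep (ninv l) acc) = acc"
proof (cases acc)
  case (Cons l' acc')
  assume r: "reduced_word acc"
  show ?thesis
  proof (cases "l' = l")
    case True
    then show ?thesis using r Cons
      by (cases acc') (auto simp: rstep_Cons reduced_Cons2 ninv_def)
  next
    case False
    then show ?thesis using Cons by (auto simp: rstep_Cons ninv_def)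
  qed
qed (simp add: rstep_Cons)

lemma reduced_foldr: "reduced_word acc \<Longrightarrow> reduced_word (foldr rstep u acc)"
  by (induction u) (auto intro: reduced_rstep)

lemma reduced_reduce: "reduced_word (reduce_word w)"
  by (simp add: reduce_word_foldr reduced_foldr)

lemma set_rstep: "set (rstep l acc) \<subseteq> insert l (set acc)"
  by (cases acc) (auto simp: rstep_Cons)

lemma set_foldr: "set (foldr rstep u acc) \<subseteq> set u \<union> set acc"
  by (induction u) (use set_rstep in fastforce)+

lemma foldr_rstep_rstep:
  assumes "reduced_word acc"
  shows "foldr rstep (rstep l r) acc = rstep l (foldr rstep r acc)"
proof (cases r)
  case (Cons l' r')
  show ?thesis
  proof (cases "l' = ninv l")
    case True
    then have "foldr rstep r acc = rstep (ninv l) (foldr rstep r' acc)" using Cons by simp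
    then show ?thesis using True Cons assms
      by (simp add: rstep_Cons rstep_ninv reduced_foldr)
  qed (use Cons in \<open>simp add: rstep_Cons\<close>)
qed simp

lemma foldr_reduce:
  assumes "reduced_word acc"
  shows "foldr rstep (reduce_word x) acc = foldr rstep x acc"
  by (induction x) (simp_all add: reduce_word_foldr foldr_rstep_rstep assms)

lemma reduce_append: "reduce_word (u @ w) = foldr rstep u (reduce_word w)"
  by (simp add: reduce_word_foldr)

lemma reduce_reduced: "reduced_word w \<Longrightarrow> reduce_word w = w"
proof (induction w)
  case (Cons l w)
  then have "reduce_word w = w" using reduced_tl by blast
  then show ?case using Cons.prems
    by (cases w) (auto simp: reduce_word_foldr rstep_Cons reduced_Cons2)
qed (simp add: reduce_word_foldr)

lemma foldr_inv_cancel: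
  assumes "reduced_word acc"
  shows "foldr rstep (rev (map ninv w) @ w) acc = acc"
proof (induction w)
  case (Cons l w)
  have "foldr rstep (rev (map ninv (l # w)) @ l # w) acc
      = foldr rstep (rev (map ninv w)) (rstep (ninv l) (rstep l (foldr rstep w acc)))"
    by simp
  also have "\<dots> = foldr rstep (rev (map ninv w)) (foldr rstep w acc)"
    using rstep_ninv[of _ "ninv l", simplified, OF reduced_foldr[OF assms]] by simp
  also have "\<dots> = acc" using Cons.IH by simp
  finally show ?case .
qed simp

lemma free_group_is_group: "group (free_group S)"
proof (rule groupI)
  let ?F = "free_group S"
  show "x \<otimes>\<^bsub>?F\<^esub> y \<in> carrier ?F" if "x \<in> carrier ?F" "y \<in> carrier ?F" for x y
  proof -
    have "set (reduce_word (x @ y)) \<subseteq> set (x @ y)"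
      using set_foldr[of "x @ y" "[]"] by (simp add: reduce_word_foldr)
    then have "snd ` set (reduce_word (x @ y)) \<subseteq> snd ` set x \<union> snd ` set y" by auto
    moreover have "snd ` set x \<union> snd ` set y \<subseteq> S" using that by (simp add: free_group_def)
    ultimately have "snd ` set (reduce_word (x @ y)) \<subseteq> S" by (rule order_trans)
    then show ?thesis by (simp add: free_group_def reduced_reduce)
  qed
  show "\<one>\<^bsub>?F\<^esub> \<in> carrier ?F" by (simp add: free_group_def)
  show "x \<otimes>\<^bsub>?F\<^esub> y \<otimes>\<^bsub>?F\<^esub> z = x \<otimes>\<^bsub>?F\<^esub> (y \<otimes>\<^bsub>?F\<^esub> z)"
    if "x \<in> carrier ?F" "y \<in> carrier ?F" "z \<in> carrier ?F" for x y z
  proof -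
    have "reduce_word (reduce_word (x @ y) @ z) = foldr rstep (reduce_word (x @ y)) (reduce_word z)"
      by (rule reduce_append)
    also have "\<dots> = foldr rstep (x @ y) (reduce_word z)"
      by (rule foldr_reduce[OF reduced_reduce])
    also have "\<dots> = foldr rstep x (reduce_word (y @ z))"
      by (simp add: reduce_append)
    also have "\<dots> = foldr rstep x (reduce_word (reduce_word (y @ z)))"
      by (simp add: reduce_reduced[OF reduced_reduce])
    also have "\<dots> = reduce_word (x @ reduce_word (y @ z))"
      by (rule reduce_append[symmetric])
    finally show ?thesis by (simp add: free_group_def)
  qed
  show "\<one>\<^bsub>?F\<^esub> \<otimes>\<^bsub>?F\<^esub> x = x" if "x \<in> carrier ?F" for x
    using that by (simp add: free_group_def reduce_reduced)
  show "\<exists>y\<in>carrier ?F. y \<otimes>\<^bsub>?F\<^esub> x = \<one>\<^bsub>?F\<^esub>" if xF: "x \<in> carrier ?F" for x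
  proof (intro bexI)
    let ?y = "reduce_word (rev (map ninv x))"
    have "reduce_word (?y @ x) = foldr rstep ?y (reduce_word x)"
      by (rule reduce_append)
    also have "\<dots> = foldr rstep (rev (map ninv x)) (reduce_word x)"
      by (rule foldr_reduce[OF reduced_reduce])
    also have "\<dots> = foldr rstep (rev (map ninv x) @ x) []"
      using xF by (simp add: free_group_def reduce_reduced reduce_word_foldr)
    also have "\<dots> = []" by (rule foldr_inv_cancel) simp
    finally show "?y \<otimes>\<^bsub>?F\<^esub> x = \<one>\<^bsub>?F\<^esub>" by (simp add: free_group_def)
    have "set ?y \<subseteq> set (rev (map ninv x))"
      using set_foldr[of "rev (map ninv x)" "[]"] by (simp add: reduce_word_foldr)
    then have "snd ` set ?y \<subseteq> snd ` set x" by (force simp: ninv_def)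
    then show "?y \<in> carrier ?F" using xF
      by (auto simp: free_group_def reduced_reduce)
  qed
qed

definition letter :: "('g, 'b) monoid_scheme \<Rightarrow> bool \<times> 'g \<Rightarrow> 'g" where
  "letter G l = (if fst l then snd l else inv\<^bsub>G\<^esub> (snd l))"

lemma word_mult_Nil[simp]: "word_mult G [] = \<one>\<^bsub>G\<^esub>"
  by (simp add: word_mult_def)

lemma word_mult_Cons: "word_mult G (l # w) = letter G l \<otimes>\<^bsub>G\<^esub> word_mult G w"
  by (cases l) (simp add: word_mult_def letter_def)

context group begin

lemma letter_closed: "snd l \<in> carrier G \<Longrightarrow> letter G l \<in> carrier G"
  by (simp add: letter_def)

lemma word_mult_closed: "snd ` set w \<subseteq> carrier G \<Longrightarrow> word_mult G w \<in> carrier G"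
  by (induction w) (auto simp: word_mult_Cons letter_closed)

lemma letter_ninv: "snd l \<in> carrier G \<Longrightarrow> letter G l \<otimes> letter G (ninv l) = \<one>"
  by (cases l) (auto simp: letter_def ninv_def)

lemma wm_rstep:
  assumes "snd l \<in> carrier G" "snd ` set r \<subseteq> carrier G"
  shows "word_mult G (rstep l r) = letter G l \<otimes> word_mult G r"
proof (cases r)
  case (Cons l' r')
  show ?thesis
  proof (cases "l' = ninv l")
    case True
    have c: "letter G l \<in> carrier G" "letter G l' \<in> carrier G" "word_mult G r' \<in> carrier G"
      using assms Cons by (auto intro!: letter_closed word_mult_closed)
    have "letter G l \<otimes> word_mult G r = (letter G l \<otimes> letter G l') \<otimes> word_mult G r'"
      using c Cons by (simp add: word_mult_Cons m_assoc)
    also have "\<dots> = word_mult G r'" using True assms c by (simp add: letter_ninv)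
    finally show ?thesis using True Cons by (simp add: rstep_Cons)
  qed (use Cons in \<open>simp add: rstep_Cons word_mult_Cons\<close>)
qed (simp add: word_mult_Cons letter_closed assms)

lemma wm_foldr:
  assumes "snd ` set u \<subseteq> carrier G" "snd ` set acc \<subseteq> carrier G"
  shows "word_mult G (foldr rstep u acc) = word_mult G u \<otimes> word_mult G acc"
  using assms(1)
proof (induction u)
  case (Cons l u)
  have s: "snd ` set (foldr rstep u acc) \<subseteq> carrier G"
    using set_foldr[of u acc] Cons.prems assms(2) by fastforce
  have c: "letter G l \<in> carrier G" "word_mult G u \<in> carrier G" "word_mult G acc \<in> carrier G"
    using Cons.prems assms(2) by (auto intro!: letter_closed word_mult_closed)
  show ?case using Cons s c by (simp add: wm_rstep word_mult_Cons m_assoc)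
qed (simp add: word_mult_closed assms)

lemma word_mult_hom:
  assumes "S \<subseteq> carrier G"
  shows "word_mult G \<in> hom (free_group S) G"
proof (rule homI)
  fix x assume "x \<in> carrier (free_group S)"
  then show "word_mult G x \<in> carrier G" using assms by (intro word_mult_closed) (auto simp: free_group_def)
next
  fix x y assume xy: "x \<in> carrier (free_group S)" "y \<in> carrier (free_group S)"
  then have s: "snd ` set x \<subseteq> carrier G" "snd ` set y \<subseteq> carrier G" using assms by (auto simp: free_group_def)
  have "word_mult G (reduce_word (x @ y)) = word_mult G (foldr rstep x (foldr rstep y []))"
    by (simp add: reduce_word_foldr)
  also have "\<dots> = word_mult G x \<otimes> word_mult G (foldr rstep y [])"
    using s set_foldr[of y "[]"] by (intro wm_foldr) force+
  also have "\<dots> = word_mult G x \<otimes> word_mult G y"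
    using s by (simp add: wm_foldr word_mult_closed)
  finally show "word_mult G (x \<otimes>\<^bsub>free_group S\<^esub> y) = word_mult G x \<otimes> word_mult G y"
    by (simp add: free_group_def)
qed

lemma word_mult_gen: "x \<in> carrier G \<Longrightarrow> word_mult G (free_gen x) = x"
  by (simp add: free_gen_def word_mult_Cons letter_def)

end

lemma free_gen_in: "x \<in> S \<Longrightarrow> free_gen x \<in> carrier (free_group S)"
  by (simp add: free_gen_def free_group_def)



lemma gt_pullback:
  assumes gt: "group_topology G T" and H: "group H" and h: "h \<in> hom H G"
  shows "group_topology H (pullback_topology (carrier H) h T)"
proof -
  let ?P = "pullback_topology (carrier H) h T"
  have G: "group G" and tT: "topspace T = carrier G"
    and mc: "continuous_map (prod_topology T T) T (\<lambda>(x, y). x \<otimes>\<^bsub>G\<^esub> y)"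
    and ic: "continuous_map T T (\<lambda>x. inv\<^bsub>G\<^esub> x)"
    using gt by (auto simp: group_topology_def)
  have hcar: "\<And>x. x \<in> carrier H \<Longrightarrow> h x \<in> carrier G" using h by (auto simp: hom_def)
  have ts: "topspace ?P = carrier H"
    using hcar tT by (auto simp: topspace_pullback_topology)
  have hc: "continuous_map ?P T h"
    using continuous_map_pullback[OF continuous_map_id[of T], of "carrier H" h] by simp
  have hh: "continuous_map (prod_topology ?P ?P) (prod_topology T T) (\<lambda>z. (h (fst z), h (snd z)))"
  proof (rule continuous_map_pairedI)
    show "continuous_map (prod_topology ?P ?P) T (\<lambda>z. h (fst z))"
      using continuous_map_compose[OF continuous_map_fst hc] by (simp add: o_def)
    show "continuous_map (prod_topology ?P ?P) T (\<lambda>z. h (snd z))"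
      using continuous_map_compose[OF continuous_map_snd hc] by (simp add: o_def)
  qed
  have m1: "continuous_map (prod_topology ?P ?P) T (\<lambda>z. h (fst z) \<otimes>\<^bsub>G\<^esub> h (snd z))"
    using continuous_map_compose[OF hh mc] by (simp add: o_def)
  have m2: "continuous_map (prod_topology ?P ?P) T (h \<circ> (\<lambda>(x, y). x \<otimes>\<^bsub>H\<^esub> y))"
  proof (rule continuous_map_eq[OF m1])
    fix z assume "z \<in> topspace (prod_topology ?P ?P)"
    then have "fst z \<in> carrier H" "snd z \<in> carrier H" unfolding topspace_prod_topology ts mem_Times_iff by auto
    then show "h (fst z) \<otimes>\<^bsub>G\<^esub> h (snd z) = (h \<circ> (\<lambda>(x, y). x \<otimes>\<^bsub>H\<^esub> y)) z"
      using h by (simp add: case_prod_unfold hom_mult)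
  qed
  have i2: "continuous_map ?P T (h \<circ> (\<lambda>x. inv\<^bsub>H\<^esub> x))"
  proof (rule continuous_map_eq[OF continuous_map_compose[OF hc ic]])
    fix x assume "x \<in> topspace ?P"
    then have "x \<in> carrier H" unfolding ts .
    then show "((\<lambda>x. inv\<^bsub>G\<^esub> x) \<circ> h) x = (h \<circ> (\<lambda>x. inv\<^bsub>H\<^esub> x)) x"
      using h H G by (simp add: group_hom.hom_inv group_hom_def group_hom_axioms_def)
  qed
  show ?thesis
    unfolding group_topology_def
  proof (intro conjI)
    show "continuous_map (prod_topology ?P ?P) ?P (\<lambda>(x, y). x \<otimes>\<^bsub>H\<^esub> y)"
      by (rule continuous_map_pullback'[OF m2]) (unfold topspace_prod_topology ts, auto simp: monoid.m_closed[OF group.is_monoid[OF H]])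
    show "continuous_map ?P ?P (\<lambda>x. inv\<^bsub>H\<^esub> x)"
      by (rule continuous_map_pullback'[OF i2]) (unfold ts, auto simp: group.inv_closed[OF H])
  qed (use H ts in \<open>simp_all only:\<close>)
qed

definition famT :: "'s topology \<Rightarrow> ((bool \<times> 's) list) topology set" where
  "famT S = {T. group_topology (free_group (topspace S)) T \<and> continuous_map S T free_gen}"

lemma free_top_group_alt:
  "free_top_group S = topology_generated_by (\<Union> {Collect (openin T) | T. T \<in> famT S})"
  unfolding free_top_group_def famT_def by simp

lemma trivT_in_fam:
  "pullback_topology (carrier (free_group (topspace S))) (\<lambda>_. ()) (discrete_topology {()}) \<in> famT S"
proof -
  let ?C = "carrier (free_group (topspace S))"
  let ?P = "pullback_topology ?C (\<lambda>_. ()) (discrete_topology {()})"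
  have ts: "topspace ?P = ?C" by (simp add: topspace_pullback_topology)
  have grp: "group (free_group (topspace S))" by (rule free_group_is_group)
  have "continuous_map (prod_topology ?P ?P) ?P (\<lambda>(x, y). x \<otimes>\<^bsub>free_group (topspace S)\<^esub> y)"
    by (rule continuous_map_pullback') (unfold topspace_prod_topology ts, auto simp: o_def monoid.m_closed[OF group.is_monoid[OF grp]])
  moreover have "continuous_map ?P ?P (\<lambda>x. inv\<^bsub>free_group (topspace S)\<^esub> x)"
    by (rule continuous_map_pullback') (unfold ts, auto simp: o_def group.inv_closed[OF grp])
  moreover have "continuous_map S ?P free_gen"
    by (rule continuous_map_pullback') (auto simp: o_def free_gen_in)
  ultimately show ?thesis unfolding famT_def group_topology_def using grp ts by simp
qed

lemma famT_topspace: "T \<in> famT S \<Longrightarrow> topspace T = carrier (free_group (topspace S))"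
  by (simp add: famT_def group_topology_def)

lemma topspace_free_top_group: "topspace (free_top_group S) = carrier (free_group (topspace S))"
proof -
  have "\<Union> (\<Union> {Collect (openin T) | T. T \<in> famT S}) = carrier (free_group (topspace S))"
  proof
    show "\<Union> (\<Union> {Collect (openin T) | T. T \<in> famT S}) \<subseteq> carrier (free_group (topspace S))"
      using famT_topspace openin_subset by blast
    show "carrier (free_group (topspace S)) \<subseteq> \<Union> (\<Union> {Collect (openin T) | T. T \<in> famT S})"
      using trivT_in_fam[of S] famT_topspace[OF trivT_in_fam[of S]]
      by (smt (verit) Sup_upper UnionI mem_Collect_eq openin_topspace subsetI)
  qed
  then show ?thesis unfolding free_top_group_alt topology_generated_by_topspace .
qed

lemma famT_open: "T \<in> famT S \<Longrightarrow> openin T U \<Longrightarrow> openin (free_top_group S) U"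
  unfolding free_top_group_alt by (rule topology_generated_by_Basis) blast

lemma famT_id: assumes "T \<in> famT S" shows "continuous_map (free_top_group S) T (\<lambda>x. x)"
  unfolding continuous_map_def
proof (intro conjI allI impI)
  show "(\<lambda>x. x) \<in> topspace (free_top_group S) \<rightarrow> topspace T"
    by (simp add: topspace_free_top_group famT_topspace[OF assms])
  fix U assume U: "openin T U"
  have "{x \<in> topspace (free_top_group S). x \<in> U} = U"
    using openin_subset[OF U] by (auto simp: topspace_free_top_group famT_topspace[OF assms])
  then show "openin (free_top_group S) {x \<in> topspace (free_top_group S). x \<in> U}"
    using famT_open[OF assms U] by simp
qed

lemma gen_basis_cases:
  assumes "U \<in> \<Union> {Collect (openin T) | T. T \<in> famT S}"
  obtains T where "T \<in> famT S" "openin T U"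
  using assms by blast

lemma gt_free_top_group: "group_topology (free_group (topspace S)) (free_top_group S)"
  unfolding group_topology_def
proof (intro conjI)
  let ?F = "free_top_group S" and ?G = "free_group (topspace S)"
  show grp: "group ?G" by (rule free_group_is_group)
  show ts: "topspace ?F = carrier ?G" by (rule topspace_free_top_group)
  have ts2: "\<Union> (\<Union> {Collect (openin T) | T. T \<in> famT S}) = carrier ?G"
    using ts unfolding free_top_group_alt topology_generated_by_topspace .
  have "continuous_map (prod_topology ?F ?F) (topology_generated_by (\<Union> {Collect (openin T) | T. T \<in> famT S})) (\<lambda>(x, y). x \<otimes>\<^bsub>?G\<^esub> y)"
  proof (rule continuous_on_generated_topo)
    fix U assume "U \<in> \<Union> {Collect (openin T) | T. T \<in> famT S}"
    then obtain T where T: "T \<in> famT S" "openin T U" by (rule gen_basis_cases)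
    have idp: "continuous_map (prod_topology ?F ?F) (prod_topology T T) (\<lambda>z. (fst z, snd z))"
      using continuous_map_compose[OF continuous_map_fst famT_id[OF T(1)]]
        continuous_map_compose[OF continuous_map_snd famT_id[OF T(1)]]
      by (intro continuous_map_pairedI) (simp_all add: o_def)
    have "continuous_map (prod_topology T T) T (\<lambda>(x, y). x \<otimes>\<^bsub>?G\<^esub> y)"
      using T(1) by (simp add: famT_def group_topology_def)
    then have "continuous_map (prod_topology ?F ?F) T (\<lambda>(x, y). x \<otimes>\<^bsub>?G\<^esub> y)"
      using continuous_map_compose[OF idp] by (simp add: o_def case_prod_unfold)
    then show "openin (prod_topology ?F ?F) ((\<lambda>(x, y). x \<otimes>\<^bsub>?G\<^esub> y) -` U \<inter> topspace (prod_topology ?F ?F))"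
      using T(2) unfolding continuous_map_alt by blast
  next
    show "(\<lambda>(x, y). x \<otimes>\<^bsub>?G\<^esub> y) ` topspace (prod_topology ?F ?F) \<subseteq> \<Union> (\<Union> {Collect (openin T) | T. T \<in> famT S})"
      unfolding ts2 topspace_prod_topology ts
      by (auto simp: monoid.m_closed[OF group.is_monoid[OF grp]])
  qed
  then show "continuous_map (prod_topology ?F ?F) ?F (\<lambda>(x, y). x \<otimes>\<^bsub>?G\<^esub> y)"
    by (simp only: free_top_group_alt[symmetric])
  have "continuous_map ?F (topology_generated_by (\<Union> {Collect (openin T) | T. T \<in> famT S})) (\<lambda>x. inv\<^bsub>?G\<^esub> x)"
  proof (rule continuous_on_generated_topo)
    fix U assume "U \<in> \<Union> {Collect (openin T) | T. T \<in> famT S}"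
    then obtain T where T: "T \<in> famT S" "openin T U" by (rule gen_basis_cases)
    have "continuous_map T T (\<lambda>x. inv\<^bsub>?G\<^esub> x)"
      using T(1) by (simp add: famT_def group_topology_def)
    then have "continuous_map ?F T (\<lambda>x. inv\<^bsub>?G\<^esub> x)"
      using continuous_map_compose[OF famT_id[OF T(1)]] by (simp add: o_def)
    then show "openin ?F ((\<lambda>x. inv\<^bsub>?G\<^esub> x) -` U \<inter> topspace ?F)"
      using T(2) unfolding continuous_map_alt by blast
  next
    show "(\<lambda>x. inv\<^bsub>?G\<^esub> x) ` topspace ?F \<subseteq> \<Union> (\<Union> {Collect (openin T) | T. T \<in> famT S})"
      unfolding ts2 ts by (auto simp: group.inv_closed[OF grp])
  qed
  then show "continuous_map ?F ?F (\<lambda>x. inv\<^bsub>?G\<^esub> x)"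
    by (simp only: free_top_group_alt[symmetric])
qed

lemma free_gen_cont: "continuous_map S (free_top_group S) free_gen"
  unfolding free_top_group_alt
proof (rule continuous_on_generated_topo)
  fix U assume "U \<in> \<Union> {Collect (openin T) | T. T \<in> famT S}"
  then obtain T where T: "T \<in> famT S" "openin T U" by (rule gen_basis_cases)
  then show "openin S (free_gen -` U \<inter> topspace S)"
    unfolding famT_def continuous_map_alt by blast
next
  have "\<Union> (\<Union> {Collect (openin T) | T. T \<in> famT S}) = carrier (free_group (topspace S))"
    using topspace_free_top_group[of S] unfolding free_top_group_alt topology_generated_by_topspace .
  then show "free_gen ` topspace S \<subseteq> \<Union> (\<Union> {Collect (openin T) | T. T \<in> famT S})"
    by (auto simp: free_gen_in)
qed

lemma grp_cancel_aux:
  assumes H: "group H" and "w \<in> carrier H" "v \<in> carrier H"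
  shows "w \<otimes>\<^bsub>H\<^esub> (inv\<^bsub>H\<^esub> w \<otimes>\<^bsub>H\<^esub> v) = v"
proof -
  interpret Hg: group H by (rule H)
  show ?thesis using assms(2,3) by (simp add: Hg.m_assoc[symmetric])
qed

definition qtop :: "'h set \<Rightarrow> 'h topology \<Rightarrow> ('h \<Rightarrow> 'g) \<Rightarrow> 'g set \<Rightarrow> 'g topology" where
  "qtop A F m B = topology (\<lambda>U. U \<subseteq> B \<and> openin F {w \<in> A. m w \<in> U})"

lemma istopology_qtop: "istopology (\<lambda>U. U \<subseteq> B \<and> openin F {w \<in> A. m w \<in> U})"
  unfolding istopology_def
proof (rule conjI; intro allI impI)
  fix S T assume "S \<subseteq> B \<and> openin F {w \<in> A. m w \<in> S}" "T \<subseteq> B \<and> openin F {w \<in> A. m w \<in> T}"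
  moreover have "{w \<in> A. m w \<in> S \<inter> T} = {w \<in> A. m w \<in> S} \<inter> {w \<in> A. m w \<in> T}" by auto
  ultimately show "S \<inter> T \<subseteq> B \<and> openin F {w \<in> A. m w \<in> S \<inter> T}" by auto
next
  fix K assume K: "\<forall>S\<in>K. S \<subseteq> B \<and> openin F {w \<in> A. m w \<in> S}"
  have "{w \<in> A. m w \<in> \<Union>K} = \<Union> ((\<lambda>S. {w \<in> A. m w \<in> S}) ` K)" by auto
  moreover have "openin F (\<Union> ((\<lambda>S. {w \<in> A. m w \<in> S}) ` K))"
    using K by (intro openin_Union) auto
  ultimately show "\<Union>K \<subseteq> B \<and> openin F {w \<in> A. m w \<in> \<Union>K}" using K by auto
qed

lemma openin_qtop: "openin (qtop A F m B) U \<longleftrightarrow> U \<subseteq> B \<and> openin F {w \<in> A. m w \<in> U}"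
  unfolding qtop_def topology_inverse'[OF istopology_qtop] ..

lemma topspace_qtop:
  assumes "A = topspace F" "m ` A \<subseteq> B"
  shows "topspace (qtop A F m B) = B"
proof -
  have "{w \<in> A. m w \<in> B} = topspace F" using assms by auto
  then have "openin (qtop A F m B) B"
    unfolding openin_qtop by simp
  then have "B \<subseteq> topspace (qtop A F m B)" by (rule openin_subset)
  moreover have "topspace (qtop A F m B) \<subseteq> B"
    using openin_qtop[of A F m B "topspace (qtop A F m B)"] by simp
  ultimately show ?thesis by blast
qed

lemma gt_right_transl:
  assumes gt: "group_topology H F" and k: "k \<in> carrier H"
  shows "continuous_map F F (\<lambda>w. w \<otimes>\<^bsub>H\<^esub> k)"
proof -
  have ts: "topspace F = carrier H" and mc: "continuous_map (prod_topology F F) F (\<lambda>(x, y). x \<otimes>\<^bsub>H\<^esub> y)"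
    using gt by (auto simp: group_topology_def)
  have "continuous_map F (prod_topology F F) (\<lambda>w. (w, k))"
    by (rule continuous_map_pairedI[OF continuous_map_id[unfolded id_def]]) (simp add: ts k)
  from continuous_map_compose[OF this mc] show ?thesis by (simp add: o_def)
qed

lemma qtop_open_map:
  assumes gt: "group_topology H F" and G: "group G" and m: "m \<in> hom H G"
    and V: "openin F V"
  shows "openin (qtop (carrier H) F m (carrier G)) (m ` V)"
proof -
  have H: "group H" and ts: "topspace F = carrier H" using gt by (auto simp: group_topology_def)
  interpret Hg: group H by (rule H)
  interpret gh: group_hom H G m using H G m by (simp add: group_hom_def group_hom_axioms_def)
  have Vc: "V \<subseteq> carrier H" using openin_subset[OF V] ts by simp
  let ?K = "{k \<in> carrier H. m k = \<one>\<^bsub>G\<^esub>}"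
  have eq: "{w \<in> carrier H. m w \<in> m ` V} = (\<Union>k\<in>?K. {w \<in> topspace F. w \<otimes>\<^bsub>H\<^esub> k \<in> V})"
  proof (intro equalityI subsetI)
    fix w assume "w \<in> {w \<in> carrier H. m w \<in> m ` V}"
    then obtain v where w: "w \<in> carrier H" and v: "v \<in> V" "m w = m v" by auto
    have vc: "v \<in> carrier H" using v Vc by auto
    let ?k = "inv\<^bsub>H\<^esub> w \<otimes>\<^bsub>H\<^esub> v"
    have "?k \<in> ?K" using w vc v by (simp add: gh.hom_mult gh.hom_inv G group.l_inv)
    moreover have "w \<otimes>\<^bsub>H\<^esub> ?k = v" using w vc by (rule grp_cancel_aux[OF H])
    ultimately show "w \<in> (\<Union>k\<in>?K. {w \<in> topspace F. w \<otimes>\<^bsub>H\<^esub> k \<in> V})" using w v ts by auto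
  next
    fix w assume "w \<in> (\<Union>k\<in>?K. {w \<in> topspace F. w \<otimes>\<^bsub>H\<^esub> k \<in> V})"
    then obtain k where k: "k \<in> carrier H" "m k = \<one>\<^bsub>G\<^esub>" and w: "w \<in> carrier H" "w \<otimes>\<^bsub>H\<^esub> k \<in> V"
      using ts by auto
    have "m (w \<otimes>\<^bsub>H\<^esub> k) = m w" using k w by (simp add: gh.hom_mult)
    then show "w \<in> {w \<in> carrier H. m w \<in> m ` V}" using w by (metis (mono_tags, lifting) image_eqI mem_Collect_eq)
  qed
  have "openin F (\<Union>k\<in>?K. {w \<in> topspace F. w \<otimes>\<^bsub>H\<^esub> k \<in> V})"
  proof (rule openin_Union, clarify)
    fix k assume "k \<in> carrier H" "m k = \<one>\<^bsub>G\<^esub>"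
    then have "continuous_map F F (\<lambda>w. w \<otimes>\<^bsub>H\<^esub> k)" by (intro gt_right_transl[OF gt])
    then show "openin F {w \<in> topspace F. w \<otimes>\<^bsub>H\<^esub> k \<in> V}"
      using V unfolding continuous_map_def by blast
  qed
  moreover have "m ` V \<subseteq> carrier G" using Vc by auto
  ultimately show ?thesis unfolding openin_qtop eq by simp
qed

lemma gt_qtop:
  assumes gt: "group_topology H F" and G: "group G" and m: "m \<in> hom H G"
    and surj: "m ` carrier H = carrier G"
  shows "group_topology G (qtop (carrier H) F m (carrier G))"
proof -
  let ?Q = "qtop (carrier H) F m (carrier G)"
  have H: "group H" and ts: "topspace F = carrier H"
    and mc: "continuous_map (prod_topology F F) F (\<lambda>(x, y). x \<otimes>\<^bsub>H\<^esub> y)"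
    and ic: "continuous_map F F (\<lambda>x. inv\<^bsub>H\<^esub> x)"
    using gt by (auto simp: group_topology_def)
  interpret gh: group_hom H G m using H G m by (simp add: group_hom_def group_hom_axioms_def)
  have tQ: "topspace ?Q = carrier G"
    by (rule topspace_qtop) (use ts surj in auto)
  have pre: "openin F {w \<in> carrier H. m w \<in> U}" if "openin ?Q U" for U
    using that unfolding openin_qtop by simp
  have mcont: "continuous_map (prod_topology ?Q ?Q) ?Q (\<lambda>(x, y). x \<otimes>\<^bsub>G\<^esub> y)"
    unfolding continuous_map_def
  proof (intro conjI allI impI)
    show "(\<lambda>(x, y). x \<otimes>\<^bsub>G\<^esub> y) \<in> topspace (prod_topology ?Q ?Q) \<rightarrow> topspace ?Q"
      unfolding topspace_prod_topology tQ by (auto simp: group.is_monoid[OF G] monoid.m_closed)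
    fix U assume U: "openin ?Q U"
    let ?S = "{z \<in> topspace (prod_topology ?Q ?Q). (\<lambda>(x, y). x \<otimes>\<^bsub>G\<^esub> y) z \<in> U}"
    let ?W = "{w \<in> carrier H. m w \<in> U}"
    let ?Z = "{z \<in> topspace (prod_topology F F). (\<lambda>(x, y). x \<otimes>\<^bsub>H\<^esub> y) z \<in> ?W}"
    have W: "openin F ?W" by (rule pre[OF U])
    have Z: "openin (prod_topology F F) ?Z"
      using conjunct2[OF mc[unfolded continuous_map_def]] W by blast
    show "openin (prod_topology ?Q ?Q) ?S"
      unfolding openin_prod_topology_alt
    proof (intro allI impI)
      fix x y assume xy: "(x, y) \<in> ?S"
      then have x: "x \<in> carrier G" and y: "y \<in> carrier G" and xyU: "x \<otimes>\<^bsub>G\<^esub> y \<in> U"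
        unfolding topspace_prod_topology tQ by auto
      obtain a where a: "a \<in> carrier H" "m a = x" using x surj by (metis imageE)
      obtain b where b: "b \<in> carrier H" "m b = y" using y surj by (metis imageE)
      have "a \<otimes>\<^bsub>H\<^esub> b \<in> carrier H" using a b by (simp add: group.is_monoid[OF H] monoid.m_closed)
      then have "(a, b) \<in> ?Z"
        using a b xyU by (simp add: ts gh.hom_mult)
      then obtain A' B' where AB: "openin F A'" "openin F B'" "a \<in> A'" "b \<in> B'" "A' \<times> B' \<subseteq> ?Z"
        using Z unfolding openin_prod_topology_alt by meson
      have "m ` A' \<times> m ` B' \<subseteq> ?S"
      proof (rule subsetI)
        fix z assume "z \<in> m ` A' \<times> m ` B'"
        then obtain a' b' where ab': "a' \<in> A'" "b' \<in> B'" "z = (m a', m b')" by blast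
        then have "(a', b') \<in> ?Z" using AB(5) by blast
        then have "a' \<in> carrier H" "b' \<in> carrier H" "m (a' \<otimes>\<^bsub>H\<^esub> b') \<in> U"
          by (auto simp: ts)
        then show "z \<in> ?S" using ab'(3)
          by (simp add: tQ gh.hom_mult)
      qed
      moreover have "openin ?Q (m ` A')" by (rule qtop_open_map[OF gt G m AB(1)])
      moreover have "openin ?Q (m ` B')" by (rule qtop_open_map[OF gt G m AB(2)])
      moreover have "x \<in> m ` A'" "y \<in> m ` B'" using AB(3,4) a b by auto
      ultimately show "\<exists>A B. openin ?Q A \<and> openin ?Q B \<and> x \<in> A \<and> y \<in> B \<and> A \<times> B \<subseteq> ?S"
        by (intro exI[of _ "m ` A'"] exI[of _ "m ` B'"]) simp
    qed
  qed
  have icont: "continuous_map ?Q ?Q (\<lambda>x. inv\<^bsub>G\<^esub> x)"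
    unfolding continuous_map_def
  proof (intro conjI allI impI)
    show "(\<lambda>x. inv\<^bsub>G\<^esub> x) \<in> topspace ?Q \<rightarrow> topspace ?Q" using G by (simp add: tQ)
    fix U assume U: "openin ?Q U"
    let ?W = "{w \<in> carrier H. m w \<in> U}"
    have W: "openin F ?W" by (rule pre[OF U])
    then have W2: "openin F {w \<in> topspace F. inv\<^bsub>H\<^esub> w \<in> ?W}"
      using ic unfolding continuous_map_def by blast
    have "{x \<in> topspace ?Q. inv\<^bsub>G\<^esub> x \<in> U} = m ` {w \<in> topspace F. inv\<^bsub>H\<^esub> w \<in> ?W}"
    proof (intro equalityI subsetI)
      fix x assume "x \<in> {x \<in> topspace ?Q. inv\<^bsub>G\<^esub> x \<in> U}"
      then have x: "x \<in> carrier G" "inv\<^bsub>G\<^esub> x \<in> U" by (auto simp: tQ)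
      obtain a where a: "a \<in> carrier H" "m a = x" using x surj by (metis imageE)
      then have "a \<in> {w \<in> topspace F. inv\<^bsub>H\<^esub> w \<in> ?W}" using x H by (simp add: ts gh.hom_inv)
      then show "x \<in> m ` {w \<in> topspace F. inv\<^bsub>H\<^esub> w \<in> ?W}" using a by blast
    next
      fix x assume "x \<in> m ` {w \<in> topspace F. inv\<^bsub>H\<^esub> w \<in> ?W}"
      then obtain w where w: "w \<in> carrier H" "inv\<^bsub>H\<^esub> w \<in> ?W" "x = m w" by (auto simp: ts)
      then show "x \<in> {x \<in> topspace ?Q. inv\<^bsub>G\<^esub> x \<in> U}" by (auto simp: tQ gh.hom_inv)
    qed
    then show "openin ?Q {x \<in> topspace ?Q. inv\<^bsub>G\<^esub> x \<in> U}"
      using qtop_open_map[OF gt G m W2] by simp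
  qed
  show ?thesis unfolding group_topology_def using G tQ mcont icont by simp
qed



theorem theorem3p12:
  fixes X :: "'a topology" and x0 :: 'a
  assumes "x0 \<in> topspace X"
  shows "(group_topology (fundamental_group X x0) (pi1_tau X x0)
          \<and> continuous_map (loop_space_top X x0) (pi1_tau X x0) (loop_class X x0)
          \<and> (\<forall>T. group_topology (fundamental_group X x0) T
                 \<and> continuous_map (loop_space_top X x0) T (loop_class X x0)
                 \<longrightarrow> (\<forall>U. openin T U \<longrightarrow> openin (pi1_tau X x0) U)))
       \<and> (\<forall>(G :: 'g monoid) TG \<Phi>.
            group_topology G TG \<and> \<Phi> \<in> hom (fundamental_group X x0) G
            \<and> continuous_map (loop_space_top X x0) TG (\<Phi> \<circ> loop_class X x0)
            \<longrightarrow> continuous_map (pi1_tau X x0) TG \<Phi>)"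
proof -
  let ?G = "fundamental_group X x0"
  let ?L = "loop_space_top X x0"
  let ?p = "loop_class X x0"
  let ?Q0 = "pi1_qtop X x0"
  let ?H = "free_group (carrier ?G)"
  let ?FF = "free_top_group ?Q0"
  let ?tau = "pi1_tau X x0"
  let ?wm = "word_mult ?G"
  have grp: "group ?G" by (rule fg_group[OF assms])
  have tL: "topspace ?L = loop_space X x0"
  proof -
    have "loop_space X x0 \<in> {{g \<in> loop_space X x0. g ` K \<subseteq> U} | K U.
        compactin (subtopology euclideanreal {0..1}) K \<and> openin X U}"
      by (rule CollectI, rule exI[of _ "{}"], rule exI[of _ "topspace X"]) auto
    then show ?thesis unfolding loop_space_top_def topology_generated_by_topspace by blast
  qed
  have Q0_eq: "?Q0 = qtop (loop_space X x0) ?L ?p (carrier ?G)"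
    unfolding pi1_qtop_def qtop_def ..
  have pimg: "?p ` loop_space X x0 \<subseteq> carrier ?G" by (simp add: fg_carrier)
  have tQ0: "topspace ?Q0 = carrier ?G"
    unfolding Q0_eq by (rule topspace_qtop[OF tL[symmetric] pimg])
  have oQ0: "openin ?Q0 U \<longleftrightarrow> U \<subseteq> carrier ?G \<and> openin ?L {w \<in> loop_space X x0. ?p w \<in> U}" for U
    unfolding Q0_eq by (rule openin_qtop)
  have pc: "continuous_map ?L ?Q0 ?p"
    unfolding continuous_map_def
  proof (intro conjI allI impI)
    show "?p \<in> topspace ?L \<rightarrow> topspace ?Q0" using pimg unfolding tL tQ0 by blast
    fix U assume "openin ?Q0 U"
    then show "openin ?L {x \<in> topspace ?L. ?p x \<in> U}" unfolding oQ0 tL by simp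
  qed
  have tau_eq: "?tau = qtop (carrier ?H) ?FF ?wm (carrier ?G)"
    unfolding pi1_tau_def tau_top_def qtop_def ..
  have gtFF: "group_topology ?H ?FF"
    using gt_free_top_group[of ?Q0] unfolding tQ0 .
  have tFF: "topspace ?FF = carrier ?H"
    using topspace_free_top_group[of ?Q0] unfolding tQ0 .
  have wmhom: "?wm \<in> hom ?H ?G" by (rule group.word_mult_hom[OF grp subset_refl])
  have wmgen: "?wm (free_gen x) = x" if "x \<in> carrier ?G" for x
    by (rule group.word_mult_gen[OF grp that])
  have surj: "?wm ` carrier ?H = carrier ?G"
  proof
    show "?wm ` carrier ?H \<subseteq> carrier ?G" using wmhom by (auto simp: hom_def)
    show "carrier ?G \<subseteq> ?wm ` carrier ?H"
    proof
      fix x assume x: "x \<in> carrier ?G"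
      then have "?wm (free_gen x) = x" by (rule wmgen)
      moreover have "free_gen x \<in> carrier ?H" using x by (rule free_gen_in)
      ultimately show "x \<in> ?wm ` carrier ?H" by (metis image_eqI)
    qed
  qed
  have gttau: "group_topology ?G ?tau"
    unfolding tau_eq by (rule gt_qtop[OF gtFF grp wmhom surj])
  have otau: "openin ?tau U \<longleftrightarrow> U \<subseteq> carrier ?G \<and> openin ?FF {w \<in> carrier ?H. ?wm w \<in> U}" for U
    unfolding tau_eq by (rule openin_qtop)
  have ttau: "topspace ?tau = carrier ?G"
    using gttau by (simp add: group_topology_def)
  have fgc: "continuous_map ?Q0 ?FF free_gen" by (rule free_gen_cont)
  have idQ: "continuous_map ?Q0 ?tau (\<lambda>x. x)"
    unfolding continuous_map_def
  proof (intro conjI allI impI)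
    show "(\<lambda>x. x) \<in> topspace ?Q0 \<rightarrow> topspace ?tau" unfolding tQ0 ttau by blast
    fix U assume U: "openin ?tau U"
    then have Uc: "U \<subseteq> carrier ?G" and W: "openin ?FF {w \<in> carrier ?H. ?wm w \<in> U}"
      unfolding otau by auto
    have "openin ?Q0 {x \<in> topspace ?Q0. free_gen x \<in> {w \<in> carrier ?H. ?wm w \<in> U}}"
      using conjunct2[OF fgc[unfolded continuous_map_def]] W by blast
    moreover have "{x \<in> topspace ?Q0. free_gen x \<in> {w \<in> carrier ?H. ?wm w \<in> U}} = U"
    proof (intro equalityI subsetI)
      fix x assume "x \<in> {x \<in> topspace ?Q0. free_gen x \<in> {w \<in> carrier ?H. ?wm w \<in> U}}"
      then have "x \<in> carrier ?G" "?wm (free_gen x) \<in> U" unfolding tQ0 by auto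
      then show "x \<in> U" using wmgen by simp
    next
      fix x assume xU: "x \<in> U"
      then have x: "x \<in> carrier ?G" using Uc by blast
      then have "free_gen x \<in> carrier ?H" by (rule free_gen_in)
      then show "x \<in> {x \<in> topspace ?Q0. free_gen x \<in> {w \<in> carrier ?H. ?wm w \<in> U}}"
        using x xU wmgen[OF x] unfolding tQ0 by simp
    qed
    moreover have "{x \<in> topspace ?Q0. x \<in> U} = U" using Uc unfolding tQ0 by blast
    ultimately show "openin ?Q0 {x \<in> topspace ?Q0. x \<in> U}" by simp
  qed
  have ptau: "continuous_map ?L ?tau ?p"
    using continuous_map_compose[OF pc idQ] by (simp add: o_def)
  have fine: "openin ?tau U"
    if gtT: "group_topology ?G T" and pT: "continuous_map ?L T ?p" and U: "openin T U" for T U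
  proof -
    have tT: "topspace T = carrier ?G" using gtT by (simp add: group_topology_def)
    have finer: "openin ?Q0 V" if V: "openin T V" for V
    proof -
      have "V \<subseteq> carrier ?G" using openin_subset[OF V] unfolding tT .
      moreover have "openin ?L {x \<in> topspace ?L. ?p x \<in> V}"
        using conjunct2[OF pT[unfolded continuous_map_def]] V by blast
      ultimately show ?thesis unfolding oQ0 tL by simp
    qed
    have idT: "continuous_map ?Q0 T (\<lambda>x. x)"
      unfolding continuous_map_def
    proof (intro conjI allI impI)
      show "(\<lambda>x. x) \<in> topspace ?Q0 \<rightarrow> topspace T" unfolding tQ0 tT by blast
      fix V assume V: "openin T V"
      have "{x \<in> topspace ?Q0. x \<in> V} = V" using openin_subset[OF V] unfolding tQ0 tT by blast
      then show "openin ?Q0 {x \<in> topspace ?Q0. x \<in> V}" using finer[OF V] by simp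
    qed
    let ?P = "pullback_topology (carrier ?H) ?wm T"
    have gtP: "group_topology ?H ?P" by (rule gt_pullback[OF gtT free_group_is_group wmhom])
    have c1: "continuous_map ?Q0 T (?wm \<circ> free_gen)"
      by (rule continuous_map_eq[OF idT]) (simp add: tQ0 wmgen)
    have fgP: "continuous_map ?Q0 ?P free_gen"
      by (rule continuous_map_pullback'[OF c1]) (auto simp: tQ0 free_gen_in)
    have Pfam: "?P \<in> famT ?Q0"
      unfolding famT_def tQ0 using gtP fgP by simp
    have "openin ?P (?wm -` U \<inter> carrier ?H)"
      unfolding openin_pullback_topology using U by blast
    then have "openin ?FF (?wm -` U \<inter> carrier ?H)" by (rule famT_open[OF Pfam])
    moreover have "?wm -` U \<inter> carrier ?H = {w \<in> carrier ?H. ?wm w \<in> U}" by blast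
    moreover have "U \<subseteq> carrier ?G" using openin_subset[OF U] unfolding tT .
    ultimately show ?thesis unfolding otau by simp
  qed
  have part2: "continuous_map ?tau TG \<Phi>"
    if gtG: "group_topology G TG" and Phi: "\<Phi> \<in> hom ?G G"
      and cPhi: "continuous_map ?L TG (\<Phi> \<circ> ?p)" for G :: "'g monoid" and TG \<Phi>
  proof -
    have tTG: "topspace TG = carrier G" using gtG by (simp add: group_topology_def)
    let ?T = "pullback_topology (carrier ?G) \<Phi> TG"
    have gtT: "group_topology ?G ?T" by (rule gt_pullback[OF gtG grp Phi])
    have pT: "continuous_map ?L ?T ?p"
      by (rule continuous_map_pullback'[OF cPhi]) (use pimg in \<open>auto simp: tL\<close>)
    show ?thesis
      unfolding continuous_map_def
    proof (intro conjI allI impI)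
      show "\<Phi> \<in> topspace ?tau \<rightarrow> topspace TG" using Phi unfolding ttau tTG by (auto simp: hom_def)
      fix V assume V: "openin TG V"
      have "openin ?T (\<Phi> -` V \<inter> carrier ?G)"
        unfolding openin_pullback_topology using V by blast
      then have "openin ?tau (\<Phi> -` V \<inter> carrier ?G)" by (rule fine[OF gtT pT])
      moreover have "\<Phi> -` V \<inter> carrier ?G = {x \<in> topspace ?tau. \<Phi> x \<in> V}" unfolding ttau by blast
      ultimately show "openin ?tau {x \<in> topspace ?tau. \<Phi> x \<in> V}" by simp
    qed
  qed
  show ?thesis
    using gttau ptau fine part2 by blast
qed

end
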